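(* Let $G=(V,E,\omega)\in\mathcal G$. For $i,j\in V$ let $\mathcal N(j)=\{k\in V:\omega_{jk}>0\}$ and $\mathcal N_s(i,j):=\sum_{k\in\mathcal N(j)}\omega_{ik}$. Then: (1) if for all $j\in V$ and all $i\in\mathcal N(j)$ we have $\omega_{ij}\,\mathcal M(\nu^{V\setminus\{j\}})\leq\mathrm{vol}(V)\,d_i^r$, then $G\in\mathcal C$; (2) if for all $j\in V$ and all $i\in V\setminus(\{j\}\cup\mathcal N(j))$ we have $\mathcal N_s(i,j)\,\mathcal M(\nu^{V\setminus\{j\}})\leq\mathrm{vol}(V)\,d_i^r$, then $G\in\mathcal C^0$.
   Context: $\mathcal{G}$ is the set of finite, simple, connected, undirected, edge-weighted graphs $G=(V,E,\omega)$ with $V=\{1,\dots,n\}$, $n\geq2$, weights $\omega_{ij}=\omega_{ji}>0$ on edges, $0$ otherwise. $d_i=\sum_j\omega_{ij}$. Fixed $r\in[0,1]$: for $u:V\to\mathbb R$, $(\Delta u)_i=d_i^{-r}\sum_j\omega_{ij}(u_i-u_j)$, $\mathcal M(u)=\sum_id_i^ru_i$, $\mathrm{vol}(V)=\sum_id_i^r$, $\mathcal A(u)=\frac{\mathcal M(u)}{\mathrm{vol}(V)}\chi_V$. Equilibrium measure $\nu^S$ ($S\subsetneq V$): unique $\nu$ with $(\Delta\nu)_i=1$ on $S$, $\nu=0$ off $S$. $f^j:=\nu^{V\setminus\{j\}}-\mathcal A(\nu^{V\setminus\{j\}})$. $\mathcal C=\{G\in\mathcal G:\forall j\ \forall i\neq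 j:\ f^j_i\geq0\}$; $\mathcal C^0=\{G\in\mathcal G:\forall j\ \forall i\neq j:\ \omega_{ij}>0\text{ or }f^j_i\geq0\}$. *)

theory Defs
  imports Main Complex_Main
begin

text \<open>Weighted graphs on the vertex set V = {1..n}, weights w :: nat => nat => real.
Only the values of w on V x V are relevant.\<close>

definition verts :: "nat \<Rightarrow> nat set" where
  "verts n = {1..n}"

definition edge_rel :: "nat \<Rightarrow> (nat \<Rightarrow> nat \<Rightarrow> real) \<Rightarrow> (nat \<times> nat) set" where
  "edge_rel n w = {(i, j). i \<in> verts n \<and> j \<in> verts n \<and> w i j > 0}"

definition is_graph :: "nat \<Rightarrow> (nat \<Rightarrow> nat \<Rightarrow> real) \<Rightarrow> bool" where
  "is_graph n w \<longleftrightarrow> n \<ge> 2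
     \<and> (\<forall>i\<in>verts n. \<forall>j\<in>verts n. w i j = w j i)
     \<and> (\<forall>i\<in>verts n. \<forall>j\<in>verts n. w i j \<ge> 0)
     \<and> (\<forall>i\<in>verts n. w i i = 0)
     \<and> (\<forall>i\<in>verts n. \<forall>j\<in>verts n. (i, j) \<in> (edge_rel n w)\<^sup>*)"

definition deg :: "nat \<Rightarrow> (nat \<Rightarrow> nat \<Rightarrow> real) \<Rightarrow> nat \<Rightarrow> real" where
  "deg n w i = (\<Sum>j\<in>verts n. w i j)"

definition lap :: "nat \<Rightarrow> (nat \<Rightarrow> nat \<Rightarrow> real) \<Rightarrow> real \<Rightarrow> (nat \<Rightarrow> real) \<Rightarrow> nat \<Rightarrow> real" where
  "lap n w r u i = deg n w i powr (- r) * (\<Sum>j\<in>verts n. w i j * (u i - u j))"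

definition mass :: "nat \<Rightarrow> (nat \<Rightarrow> nat \<Rightarrow> real) \<Rightarrow> real \<Rightarrow> (nat \<Rightarrow> real) \<Rightarrow> real" where
  "mass n w r u = (\<Sum>i\<in>verts n. deg n w i powr r * u i)"

definition vol :: "nat \<Rightarrow> (nat \<Rightarrow> nat \<Rightarrow> real) \<Rightarrow> real \<Rightarrow> real" where
  "vol n w r = (\<Sum>i\<in>verts n. deg n w i powr r)"

definition avg :: "nat \<Rightarrow> (nat \<Rightarrow> nat \<Rightarrow> real) \<Rightarrow> real \<Rightarrow> (nat \<Rightarrow> real) \<Rightarrow> real" where
  "avg n w r u = mass n w r u / vol n w r"

text \<open>Equilibrium measure of S (a proper subset of V): the unique function with
Laplacian 1 on S and vanishing off S (we also make it vanish outside V).\<close>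
definition eqm :: "nat \<Rightarrow> (nat \<Rightarrow> nat \<Rightarrow> real) \<Rightarrow> real \<Rightarrow> nat set \<Rightarrow> nat \<Rightarrow> real" where
  "eqm n w r S = (THE \<nu>. (\<forall>i\<in>S. lap n w r \<nu> i = 1) \<and> (\<forall>i. i \<notin> S \<longrightarrow> \<nu> i = 0))"

definition fj :: "nat \<Rightarrow> (nat \<Rightarrow> nat \<Rightarrow> real) \<Rightarrow> real \<Rightarrow> nat \<Rightarrow> nat \<Rightarrow> real" where
  "fj n w r j i = eqm n w r (verts n - {j}) i - avg n w r (eqm n w r (verts n - {j}))"

definition in_C :: "nat \<Rightarrow> (nat \<Rightarrow> nat \<Rightarrow> real) \<Rightarrow> real \<Rightarrow> bool" where
  "in_C n w r \<longleftrightarrow> (\<forall>j\<in>verts n. \<forall>i\<in>verts n. i \<noteq> j \<longrightarrow> fj n w r j i \<ge> 0)"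

definition in_C0 :: "nat \<Rightarrow> (nat \<Rightarrow> nat \<Rightarrow> real) \<Rightarrow> real \<Rightarrow> bool" where
  "in_C0 n w r \<longleftrightarrow> (\<forall>j\<in>verts n. \<forall>i\<in>verts n. i \<noteq> j \<longrightarrow> w i j > 0 \<or> fj n w r j i \<ge> 0)"

definition nbr :: "nat \<Rightarrow> (nat \<Rightarrow> nat \<Rightarrow> real) \<Rightarrow> nat \<Rightarrow> nat set" where
  "nbr n w j = {k\<in>verts n. w j k > 0}"

definition Ns :: "nat \<Rightarrow> (nat \<Rightarrow> nat \<Rightarrow> real) \<Rightarrow> nat \<Rightarrow> nat \<Rightarrow> real" where
  "Ns n w i j = (\<Sum>k\<in>nbr n w j. w i k)"

end

theory Submission imports Defs "Jordan_Normal_Form.Determinant" begin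
lemma inj_imp_solvable:
  fixes A :: "real mat"
  assumes A: "A \<in> carrier_mat n n" and b: "b \<in> carrier_vec n"
    and inj: "\<And>v. v \<in> carrier_vec n \<Longrightarrow> A *\<^sub>v v = 0\<^sub>v n \<Longrightarrow> v = 0\<^sub>v n"
  shows "\<exists>x\<in>carrier_vec n. A *\<^sub>v x = b"
proof -
  have "det A \<noteq> 0" using det_0_iff_vec_prod_zero_field[OF A] inj by blast
  from det_non_zero_imp_unit[OF A this, of "()"]
  obtain B where B: "B \<in> carrier_mat n n" "A * B = 1\<^sub>m n"
    unfolding Units_def ring_mat_def by auto
  have "A *\<^sub>v (B *\<^sub>v b) = (A * B) *\<^sub>v b" by (rule assoc_mult_mat_vec[symmetric, OF A B(1) b])
  also have "\<dots> = b" using B b by simp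
  finally show ?thesis using B b by (intro bexI[of _ "B *\<^sub>v b"]) auto
qed
lemma fin_V: "finite (verts n)" by (simp add: verts_def)

lemma g_sym: "is_graph n w \<Longrightarrow> i \<in> verts n \<Longrightarrow> j \<in> verts n \<Longrightarrow> w i j = w j i"
  by (simp add: is_graph_def)
lemma g_nn: "is_graph n w \<Longrightarrow> i \<in> verts n \<Longrightarrow> j \<in> verts n \<Longrightarrow> w i j \<ge> 0"
  by (simp add: is_graph_def)
lemma g_conn: "is_graph n w \<Longrightarrow> i \<in> verts n \<Longrightarrow> j \<in> verts n \<Longrightarrow> (i, j) \<in> (edge_rel n w)\<^sup>*"
  by (simp add: is_graph_def)

lemma edge_relD: "(a, b) \<in> edge_rel n w \<Longrightarrow> a \<in> verts n \<and> b \<in> verts n \<and> w a b > 0"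
  unfolding edge_rel_def by simp

lemma maxp:
  assumes G: "is_graph n w" and j: "j \<in> verts n"
    and sub: "\<forall>i\<in>verts n - {j}. (\<Sum>k\<in>verts n. w i k * (u i - u k)) \<le> (0::real)"
  shows "\<forall>i\<in>verts n. u i \<le> u j"
proof -
  define M where "M = Max (u ` verts n)"
  have ne: "verts n \<noteq> {}" using j by auto
  have le: "u k \<le> M" if "k \<in> verts n" for k
    unfolding M_def using that by (intro Max_ge) (simp_all add: fin_V)
  have "M \<in> u ` verts n" unfolding M_def using ne by (intro Max_in) (simp_all add: fin_V)
  then obtain m where m: "m \<in> verts n" "u m = M" by auto
  have "(m, x) \<in> (edge_rel n w)\<^sup>* \<Longrightarrow> u x = M \<or> u j = M" for x
  proof (induction rule: rtrancl_induct)
    case base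
    then show ?case using m by simp
  next
    case (step y z)
    show ?case
    proof (cases "u j = M")
      case False
      with step.IH have uy: "u y = M" by simp
      have yz: "y \<in> verts n \<and> z \<in> verts n \<and> w y z > 0" by (rule edge_relD[OF step.hyps(2)])
      hence y: "y \<in> verts n" and z: "z \<in> verts n" and wyz: "w y z > 0" by simp_all
      have "y \<noteq> j" using False uy by auto
      with sub y have s: "(\<Sum>k\<in>verts n. w y k * (u y - u k)) \<le> 0" by auto
      have nn: "\<forall>k\<in>verts n. 0 \<le> w y k * (u y - u k)"
      proof
        fix k assume k: "k \<in> verts n"
        have "0 \<le> u y - u k" using le[OF k] uy by simp
        thus "0 \<le> w y k * (u y - u k)" using g_nn[OF G y k] by simp
      qed
      hence "(\<Sum>k\<in>verts n. w y k * (u y - u k)) = 0" by (intro antisym[OF s] sum_nonneg) (use nn in auto)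
      hence "\<forall>k\<in>verts n. w y k * (u y - u k) = 0"
        by (subst (asm) sum_nonneg_eq_0_iff[OF fin_V]) (use nn in auto)
      hence "w y z * (u y - u z) = 0" using z by simp
      hence "u z = M" using wyz uy by simp
      then show ?thesis by simp
    qed simp
  qed
  from this[OF g_conn[OF G m(1) j]] have "u j = M" by auto
  thus ?thesis using le by auto
qed

lemma harm_zero:
  assumes G: "is_graph n w" and j: "j \<in> verts n" and uj: "u j = 0"
    and h: "\<forall>i\<in>verts n - {j}. (\<Sum>k\<in>verts n. w i k * (u i - u k)) = (0::real)"
  shows "\<forall>i\<in>verts n. u i = 0"
proof -
  have h1: "\<forall>i\<in>verts n - {j}. (\<Sum>k\<in>verts n. w i k * (u i - u k)) \<le> 0"
    using h by simp
  have a: "\<forall>i\<in>verts n. u i \<le> u j" using maxp[OF G j h1] .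
  have h2: "\<forall>i\<in>verts n - {j}. (\<Sum>k\<in>verts n. w i k * ((- u i) - (- u k))) \<le> 0"
  proof
    fix i assume i: "i \<in> verts n - {j}"
    have e: "(\<Sum>k\<in>verts n. w i k * ((- u i) - (- u k))) = - (\<Sum>k\<in>verts n. w i k * (u i - u k))"
      unfolding sum_negf[symmetric] by (rule sum.cong) (simp_all add: right_diff_distrib)
    show "(\<Sum>k\<in>verts n. w i k * ((- u i) - (- u k))) \<le> 0"
      unfolding e using h i by simp
  qed
  have b: "\<forall>i\<in>verts n. - u i \<le> - u j" using maxp[OF G j h2] .
  show ?thesis
  proof
    fix i assume i: "i \<in> verts n"
    have "u i \<le> 0" using a i uj by auto
    moreover have "- u i \<le> 0" using b i uj by auto
    ultimately show "u i = 0" by linarith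
  qed
qed

lemma deg_pos:
  assumes G: "is_graph n w" and i: "i \<in> verts n"
  shows "deg n w i > 0"
proof -
  have n2: "n \<ge> 2" using G by (simp add: is_graph_def)
  obtain k where k: "k \<in> verts n" "k \<noteq> i"
  proof (cases "i = 1")
    case True thus ?thesis using that[of 2] n2 by (auto simp: verts_def)
  next
    case False thus ?thesis using that[of 1] n2 by (auto simp: verts_def)
  qed
  have "(i, k) \<in> (edge_rel n w)\<^sup>*" using g_conn[OF G i k(1)] .
  then obtain y where "(i, y) \<in> edge_rel n w" using k(2)
    by (cases rule: converse_rtranclE) auto
  hence y: "y \<in> verts n" "w i y > 0" by (auto simp: edge_rel_def)
  have "w i y \<le> deg n w i" unfolding deg_def
    using y g_nn[OF G i] by (intro member_le_sum) (auto simp: fin_V)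
  thus ?thesis using y by simp
qed

lemma vol_pos:
  assumes G: "is_graph n w"
  shows "vol n w r > 0"
proof -
  have n2: "n \<ge> 2" using G by (simp add: is_graph_def)
  have "verts n \<noteq> {}" using n2 by (auto simp: verts_def)
  moreover have "deg n w i powr r > 0" if "i \<in> verts n" for i
    using deg_pos[OF G that] by simp
  ultimately show ?thesis unfolding vol_def using fin_V
    by (intro sum_pos) auto
qed

lemma sum_verts: "(\<Sum>k\<in>verts n. g k) = (\<Sum>b<n. g (Suc b))"
  unfolding verts_def by (simp add: sum.atLeast1_atMost_eq)

lemma sum_diff_form: "(\<Sum>k\<in>verts n. w i k * (u i - u k)) = deg n w i * u i - (\<Sum>b<n. w i (Suc b) * u (Suc b))"
proof -
  have "(\<Sum>k\<in>verts n. w i k * (u i - u k)) = (\<Sum>k\<in>verts n. w i k * u i) - (\<Sum>k\<in>verts n. w i k * u k)"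
    by (simp add: right_diff_distrib sum_subtractf)
  also have "(\<Sum>k\<in>verts n. w i k * u i) = deg n w i * u i"
    unfolding deg_def by (simp add: sum_distrib_right)
  also have "(\<Sum>k\<in>verts n. w i k * u k) = (\<Sum>b<n. w i (Suc b) * u (Suc b))"
    by (rule sum_verts)
  finally show ?thesis .
qed

lemma lap_eq1:
  assumes G: "is_graph n w" and i: "i \<in> verts n"
  shows "(lap n w r u i = 1) = ((\<Sum>k\<in>verts n. w i k * (u i - u k)) = deg n w i powr r)"
proof -
  have d: "deg n w i > 0" using deg_pos[OF G i] .
  have p: "deg n w i powr r > 0" using d by simp
  define X where "X = (\<Sum>k\<in>verts n. w i k * (u i - u k))"
  define c where "c = deg n w i powr r"
  have "deg n w i powr (- r) = inverse c" using d unfolding c_def by (simp add: powr_minus)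
  hence l: "lap n w r u i = inverse c * X" unfolding lap_def X_def by simp
  have "(inverse c * X = 1) = (X = c)" using p unfolding c_def by (auto simp: field_simps)
  thus ?thesis using l unfolding X_def c_def by simp
qed

definition Amat :: "nat \<Rightarrow> (nat \<Rightarrow> nat \<Rightarrow> real) \<Rightarrow> nat \<Rightarrow> real mat" where
  "Amat n w j = mat n n (\<lambda>(a,b). if Suc a = j then (if b = a then 1 else 0)
      else (if a = b then deg n w (Suc a) else 0) - w (Suc a) (Suc b))"

lemma Amat_row:
  assumes a: "a < n" and v: "v \<in> carrier_vec n"
  shows "(Amat n w j *\<^sub>v v) $ a = (if Suc a = j then v $ a
     else (\<Sum>k\<in>verts n. w (Suc a) k * ((\<lambda>k. v $ (k - 1)) (Suc a) - (\<lambda>k. v $ (k - 1)) k)))"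
proof -
  have "(Amat n w j *\<^sub>v v) $ a = (\<Sum>b<n. Amat n w j $$ (a, b) * v $ b)"
    using a v unfolding Amat_def by (simp add: scalar_prod_def atLeast0LessThan)
  also have "\<dots> = (\<Sum>b<n. (if Suc a = j then (if b = a then 1 else 0)
      else (if a = b then deg n w (Suc a) else 0) - w (Suc a) (Suc b)) * v $ b)"
    using a unfolding Amat_def by (intro sum.cong) auto
  also have "\<dots> = (if Suc a = j then v $ a
     else (\<Sum>k\<in>verts n. w (Suc a) k * ((\<lambda>k. v $ (k - 1)) (Suc a) - (\<lambda>k. v $ (k - 1)) k)))"
  proof (cases "Suc a = j")
    case True
    have "(\<Sum>b<n. (if Suc a = j then (if b = a then 1 else 0)
      else (if a = b then deg n w (Suc a) else 0) - w (Suc a) (Suc b)) * v $ b)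
      = (\<Sum>b<n. (if b = a then v $ b else 0))"
      by (intro sum.cong) (simp_all add: True)
    then show ?thesis using a True by (simp add: sum.delta)
  next
    case False
    have "(\<Sum>b<n. ((if a = b then deg n w (Suc a) else 0) - w (Suc a) (Suc b)) * v $ b)
       = (\<Sum>b<n. (if a = b then deg n w (Suc a) * v $ b else 0) - w (Suc a) (Suc b) * v $ b)"
      by (intro sum.cong) (auto simp: left_diff_distrib)
    also have "\<dots> = (\<Sum>b<n. (if a = b then deg n w (Suc a) * v $ b else 0)) - (\<Sum>b<n. w (Suc a) (Suc b) * v $ b)"
      by (rule sum_subtractf)
    also have "\<dots> = deg n w (Suc a) * v $ a - (\<Sum>b<n. w (Suc a) (Suc b) * v $ b)"
      using a by (simp add: sum.delta)
    finally show ?thesis using False sum_diff_form[where n=n and w=w and i="Suc a" and u="\<lambda>k. v $ (k - 1)"] by simp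
  qed
  finally show ?thesis .
qed


lemma eqm_props:
  assumes G: "is_graph n w" and j: "j \<in> verts n"
  shows "(\<forall>i\<in>verts n - {j}. (\<Sum>k\<in>verts n. w i k * (eqm n w r (verts n - {j}) i - eqm n w r (verts n - {j}) k)) = deg n w i powr r)
       \<and> (\<forall>i. i \<notin> verts n - {j} \<longrightarrow> eqm n w r (verts n - {j}) i = 0)"
proof -
  define S where "S = verts n - {j}"
  define A where "A = Amat n w j"
  define bv where "bv = vec n (\<lambda>a. if Suc a = j then 0 else deg n w (Suc a) powr r)"
  have Ac: "A \<in> carrier_mat n n" unfolding A_def Amat_def by simp
  have bc: "bv \<in> carrier_vec n" unfolding bv_def by simp
  have jn: "j - 1 < n" "Suc (j - 1) = j" using j by (auto simp: verts_def)
  have inj: "v = 0\<^sub>v n" if v: "v \<in> carrier_vec n" and Av: "A *\<^sub>v v = 0\<^sub>v n" for v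
  proof -
    define f where "f k = v $ (k - 1)" for k
    have "(A *\<^sub>v v) $ (j - 1) = 0" using Av jn by simp
    hence fj: "f j = 0" using Amat_row[OF jn(1) v, of w j] jn unfolding A_def f_def by simp
    have h: "\<forall>i\<in>verts n - {j}. (\<Sum>k\<in>verts n. w i k * (f i - f k)) = 0"
    proof
      fix i assume i: "i \<in> verts n - {j}"
      hence a: "i - 1 < n" "Suc (i - 1) = i" by (auto simp: verts_def)
      have "(A *\<^sub>v v) $ (i - 1) = 0" using Av a by simp
      thus "(\<Sum>k\<in>verts n. w i k * (f i - f k)) = 0"
        using Amat_row[OF a(1) v, of w j] a i unfolding A_def f_def by simp
    qed
    have z: "\<forall>i\<in>verts n. f i = 0" by (rule harm_zero[OF G j fj h])
    show ?thesis
    proof (rule eq_vecI)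
      fix a assume "a < dim_vec (0\<^sub>v n :: real vec)"
      hence a: "a < n" by simp
      hence "Suc a \<in> verts n" by (simp add: verts_def)
      hence "f (Suc a) = 0" using z by blast
      thus "v $ a = 0\<^sub>v n $ a" using a unfolding f_def by simp
    qed (use v in simp)
  qed
  obtain x where x: "x \<in> carrier_vec n" "A *\<^sub>v x = bv"
    using inj_imp_solvable[OF Ac bc inj] by blast
  define nu where "nu k = (if k \<in> S then x $ (k - 1) else 0)" for k
  have xj: "x $ (j - 1) = 0"
  proof -
    have "(A *\<^sub>v x) $ (j - 1) = 0" using x(2) jn unfolding bv_def by simp
    thus ?thesis using Amat_row[OF jn(1) x(1), of w j] jn unfolding A_def by simp
  qed
  have nuV: "nu k = x $ (k - 1)" if "k \<in> verts n" for k
    using that xj unfolding nu_def S_def by auto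
  have sol: "(\<Sum>k\<in>verts n. w i k * (nu i - nu k)) = deg n w i powr r" if i: "i \<in> S" for i
  proof -
    have iV: "i \<in> verts n" "i \<noteq> j" using i unfolding S_def by auto
    hence a: "i - 1 < n" "Suc (i - 1) = i" by (auto simp: verts_def)
    have "(A *\<^sub>v x) $ (i - 1) = deg n w i powr r" using x(2) a iV unfolding bv_def by simp
    hence "(\<Sum>k\<in>verts n. w i k * (x $ (i - 1) - x $ (k - 1))) = deg n w i powr r"
      using Amat_row[OF a(1) x(1), of w j] a iV unfolding A_def by simp
    moreover have "(\<Sum>k\<in>verts n. w i k * (nu i - nu k)) = (\<Sum>k\<in>verts n. w i k * (x $ (i - 1) - x $ (k - 1)))"
      using iV by (intro sum.cong) (simp_all add: nuV)
    ultimately show ?thesis by simp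
  qed
  have P_nu: "(\<forall>i\<in>S. lap n w r nu i = 1) \<and> (\<forall>i. i \<notin> S \<longrightarrow> nu i = 0)"
  proof (intro conjI allI ballI impI)
    fix i assume i: "i \<in> S"
    hence iV: "i \<in> verts n" unfolding S_def by auto
    show "lap n w r nu i = 1" using lap_eq1[OF G iV] sol[OF i] by simp
  next
    fix i assume "i \<notin> S" thus "nu i = 0" unfolding nu_def by simp
  qed
  have uniq: "nu' = nu" if P: "(\<forall>i\<in>S. lap n w r nu' i = 1) \<and> (\<forall>i. i \<notin> S \<longrightarrow> nu' i = 0)" for nu'
  proof -
    define u where "u k = nu k - nu' k" for k
    have jS: "j \<notin> S" unfolding S_def by simp
    have uj: "u j = 0" using P P_nu jS unfolding u_def by simp
    have h: "\<forall>i\<in>verts n - {j}. (\<Sum>k\<in>verts n. w i k * (u i - u k)) = 0"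
    proof
      fix i assume i: "i \<in> verts n - {j}"
      hence iS: "i \<in> S" and iV: "i \<in> verts n" unfolding S_def by auto
      have e1: "(\<Sum>k\<in>verts n. w i k * (nu' i - nu' k)) = deg n w i powr r"
        using P iS lap_eq1[OF G iV] by auto
      have "(\<Sum>k\<in>verts n. w i k * (u i - u k)) = (\<Sum>k\<in>verts n. w i k * (nu i - nu k) - w i k * (nu' i - nu' k))"
        unfolding u_def by (intro sum.cong) (simp_all add: algebra_simps)
      also have "\<dots> = 0" unfolding sum_subtractf using e1 sol[OF iS] by simp
      finally show "(\<Sum>k\<in>verts n. w i k * (u i - u k)) = 0" .
    qed
    have z: "\<forall>i\<in>verts n. u i = 0" by (rule harm_zero[OF G j uj h])
    show ?thesis
    proof
      fix k show "nu' k = nu k"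
      proof (cases "k \<in> S")
        case True
        hence "k \<in> verts n" unfolding S_def by auto
        thus ?thesis using z unfolding u_def by auto
      next
        case False thus ?thesis using P P_nu by auto
      qed
    qed
  qed
  have E: "eqm n w r S = nu" unfolding eqm_def
    by (rule the_equality[where a=nu]) (rule P_nu, erule uniq)
  show ?thesis unfolding S_def[symmetric] E using sol P_nu by blast
qed


lemma eqm_nonneg:
  assumes G: "is_graph n w" and j: "j \<in> verts n" and k: "k \<in> verts n"
  shows "eqm n w r (verts n - {j}) k \<ge> 0"
proof -
  define E where "E = eqm n w r (verts n - {j})"
  have P: "\<forall>i\<in>verts n - {j}. (\<Sum>k\<in>verts n. w i k * (E i - E k)) = deg n w i powr r"
    "\<forall>i. i \<notin> verts n - {j} \<longrightarrow> E i = 0"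
    using eqm_props[OF G j, of r] unfolding E_def by blast+
  have h: "\<forall>i\<in>verts n - {j}. (\<Sum>k\<in>verts n. w i k * ((- E i) - (- E k))) \<le> 0"
  proof
    fix i assume i: "i \<in> verts n - {j}"
    have e: "(\<Sum>k\<in>verts n. w i k * ((- E i) - (- E k))) = - (\<Sum>k\<in>verts n. w i k * (E i - E k))"
      unfolding sum_negf[symmetric] by (rule sum.cong) (simp_all add: right_diff_distrib)
    have "deg n w i powr r \<ge> 0" by simp
    thus "(\<Sum>k\<in>verts n. w i k * ((- E i) - (- E k))) \<le> 0"
      unfolding e using P(1) i by simp
  qed
  have "- E k \<le> - E j" using maxp[OF G j h] k by blast
  moreover have "E j = 0" using P(2) by simp
  ultimately show ?thesis unfolding E_def by simp
qed

lemma part1_aux: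
  assumes G: "is_graph n w" and j: "j \<in> verts n" and i: "i \<in> verts n" "i \<noteq> j"
    and H: "\<forall>i\<in>nbr n w j. w i j * mass n w r (eqm n w r (verts n - {j})) \<le> vol n w r * deg n w i powr r"
  shows "avg n w r (eqm n w r (verts n - {j})) \<le> eqm n w r (verts n - {j}) i"
proof -
  define E where "E = eqm n w r (verts n - {j})"
  define S where "S = verts n - {j}"
  have P: "\<forall>i\<in>S. (\<Sum>k\<in>verts n. w i k * (E i - E k)) = deg n w i powr r"
    "\<forall>i. i \<notin> S \<longrightarrow> E i = 0"
    using eqm_props[OF G j, of r] unfolding E_def S_def by blast+
  have Ej: "E j = 0" using P(2) unfolding S_def by simp
  have fS: "finite S" unfolding S_def by (simp add: fin_V)
  have iS: "i \<in> S" using i unfolding S_def by simp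
  hence neS: "S \<noteq> {}" by auto
  have "Min (E ` S) \<in> E ` S" using fS neS by (intro Min_in) simp_all
  then obtain m where m: "m \<in> S" "E m = Min (E ` S)" by auto
  have mle: "E m \<le> E k" if "k \<in> S" for k using m(2) fS that by simp
  have mV: "m \<in> verts n" "m \<noteq> j" using m unfolding S_def by auto
  have tw: "w m k * (E m - E k) \<le> (if k = j then w m j * E m else 0)" if k: "k \<in> verts n" for k
  proof (cases "k = j")
    case True thus ?thesis using Ej by simp
  next
    case False
    hence "k \<in> S" using k unfolding S_def by simp
    hence "E m - E k \<le> 0" using mle by simp
    moreover have "w m k \<ge> 0" using g_nn[OF G mV(1) k] .
    ultimately show ?thesis using False by (simp add: mult_nonneg_nonpos)
  qed
  have "deg n w m powr r = (\<Sum>k\<in>verts n. w m k * (E m - E k))" using P(1) m(1) by simp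
  also have "\<dots> \<le> (\<Sum>k\<in>verts n. (if k = j then w m j * E m else 0))"
    by (rule sum_mono) (rule tw)
  also have "\<dots> = w m j * E m" using j by (simp add: sum.delta' fin_V)
  finally have dle: "deg n w m powr r \<le> w m j * E m" .
  have dpos: "deg n w m powr r > 0" using deg_pos[OF G mV(1)] by simp
  have wnn: "w m j \<ge> 0" using g_nn[OF G mV(1) j] .
  have wpos: "w m j > 0"
  proof (rule ccontr)
    assume "\<not> w m j > 0" hence "w m j = 0" using wnn by simp
    thus False using dle dpos by simp
  qed
  have "m \<in> nbr n w j" unfolding nbr_def using mV wpos g_sym[OF G mV(1) j] by simp
  hence "w m j * mass n w r E \<le> vol n w r * deg n w m powr r" using H unfolding E_def by blast
  also have "\<dots> \<le> vol n w r * (w m j * E m)"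
    using dle vol_pos[OF G, of r] by (simp add: mult_left_mono)
  finally have "w m j * mass n w r E \<le> w m j * (vol n w r * E m)" by (simp add: algebra_simps)
  hence "mass n w r E \<le> vol n w r * E m" using wpos by simp
  hence "avg n w r E \<le> E m" unfolding avg_def using vol_pos[OF G, of r]
    by (simp add: pos_divide_le_eq mult.commute)
  also have "\<dots> \<le> E i" using mle[OF iS] .
  finally show ?thesis unfolding E_def .
qed

lemma part2_aux:
  assumes G: "is_graph n w" and j: "j \<in> verts n" and i: "i \<in> verts n" "i \<noteq> j" "\<not> w i j > 0"
    and H: "\<forall>i\<in>verts n - ({j} \<union> nbr n w j). Ns n w i j * mass n w r (eqm n w r (verts n - {j})) \<le> vol n w r * deg n w i powr r"
  shows "avg n w r (eqm n w r (verts n - {j})) \<le> eqm n w r (verts n - {j}) i"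
proof -
  define E where "E = eqm n w r (verts n - {j})"
  define S where "S = verts n - {j}"
  define T where "T = verts n - ({j} \<union> nbr n w j)"
  have P: "\<forall>i\<in>S. (\<Sum>k\<in>verts n. w i k * (E i - E k)) = deg n w i powr r"
    "\<forall>i. i \<notin> S \<longrightarrow> E i = 0"
    using eqm_props[OF G j, of r] unfolding E_def S_def by blast+
  have Enn: "E k \<ge> 0" if "k \<in> verts n" for k using eqm_nonneg[OF G j that] unfolding E_def .
  have fT: "finite T" unfolding T_def by (simp add: fin_V)
  have "i \<notin> nbr n w j" using i g_sym[OF G i(1) j] unfolding nbr_def by simp
  hence iT: "i \<in> T" using i unfolding T_def by simp
  hence neT: "T \<noteq> {}" by auto
  have "Min (E ` T) \<in> E ` T" using fT neT by (intro Min_in) simp_all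
  then obtain m where m: "m \<in> T" "E m = Min (E ` T)" by auto
  have mle: "E m \<le> E k" if "k \<in> T" for k using m(2) fT that by simp
  have mV: "m \<in> verts n" "m \<noteq> j" "m \<notin> nbr n w j" using m unfolding T_def by auto
  have mS: "m \<in> S" using mV unfolding S_def by simp
  have tw: "w m k * (E m - E k) \<le> (if k \<in> nbr n w j then w m k * E m else 0)" if k: "k \<in> verts n" for k
  proof -
    have wnn: "w m k \<ge> 0" using g_nn[OF G mV(1) k] .
    show ?thesis
    proof (cases "k \<in> nbr n w j")
      case True
      have "w m k * E k \<ge> 0" using wnn Enn[OF k] by simp
      thus ?thesis using True by (simp add: right_diff_distrib)
    next
      case nb: False
      show ?thesis
      proof (cases "k = j")
        case True
        have "\<not> w j m > 0" using mV unfolding nbr_def by simp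
        hence "w m k = 0" using True wnn g_sym[OF G mV(1) j] by simp
        thus ?thesis by simp
      next
        case False
        hence "k \<in> T" using k nb unfolding T_def by simp
        hence "E m - E k \<le> 0" using mle by simp
        thus ?thesis using nb wnn by (simp add: mult_nonneg_nonpos)
      qed
    qed
  qed
  have nsub: "nbr n w j \<subseteq> verts n" unfolding nbr_def by auto
  have "deg n w m powr r = (\<Sum>k\<in>verts n. w m k * (E m - E k))" using P(1) mS by simp
  also have "\<dots> \<le> (\<Sum>k\<in>verts n. (if k \<in> nbr n w j then w m k * E m else 0))"
    by (rule sum_mono) (rule tw)
  also have "\<dots> = (\<Sum>k\<in>nbr n w j. w m k * E m)"
  proof -
    have "{k \<in> verts n. k \<in> nbr n w j} = nbr n w j" using nsub by blast
    thus ?thesis by (simp add: sum.inter_filter[symmetric] fin_V)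
  qed
  also have "\<dots> = Ns n w m j * E m" unfolding Ns_def by (simp add: sum_distrib_right)
  finally have dle: "deg n w m powr r \<le> Ns n w m j * E m" .
  have dpos: "deg n w m powr r > 0" using deg_pos[OF G mV(1)] by simp
  have Nnn: "Ns n w m j \<ge> 0" unfolding Ns_def using nsub g_nn[OF G mV(1)]
    by (intro sum_nonneg) auto
  have Npos: "Ns n w m j > 0"
  proof (rule ccontr)
    assume "\<not> Ns n w m j > 0" hence "Ns n w m j = 0" using Nnn by simp
    thus False using dle dpos by simp
  qed
  have "Ns n w m j * mass n w r E \<le> vol n w r * deg n w m powr r" using H m(1) unfolding E_def T_def by blast
  also have "\<dots> \<le> vol n w r * (Ns n w m j * E m)"
    using dle vol_pos[OF G, of r] by (simp add: mult_left_mono)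
  finally have "Ns n w m j * mass n w r E \<le> Ns n w m j * (vol n w r * E m)" by (simp add: algebra_simps)
  hence "mass n w r E \<le> vol n w r * E m" using Npos by simp
  hence "avg n w r E \<le> E m" unfolding avg_def using vol_pos[OF G, of r]
    by (simp add: pos_divide_le_eq mult.commute)
  also have "\<dots> \<le> E i" using mle[OF iT] .
  finally show ?thesis unfolding E_def .
qed

theorem lemma6p6:
  fixes n :: nat and w :: "nat \<Rightarrow> nat \<Rightarrow> real" and r :: real
  assumes "is_graph n w" and "0 \<le> r" and "r \<le> 1"
  shows "((\<forall>j\<in>verts n. \<forall>i\<in>nbr n w j.
            w i j * mass n w r (eqm n w r (verts n - {j})) \<le> vol n w r * deg n w i powr r)
          \<longrightarrow> in_C n w r)
       \<and> ((\<forall>j\<in>verts n. \<forall>i\<in>verts n - ({j} \<union> nbr n w j).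
            Ns n w i j * mass n w r (eqm n w r (verts n - {j})) \<le> vol n w r * deg n w i powr r)
          \<longrightarrow> in_C0 n w r)"
proof (intro conjI impI)
  assume H: "\<forall>j\<in>verts n. \<forall>i\<in>nbr n w j.
            w i j * mass n w r (eqm n w r (verts n - {j})) \<le> vol n w r * deg n w i powr r"
  show "in_C n w r" unfolding in_C_def fj_def
  proof (intro ballI impI)
    fix j i assume j: "j \<in> verts n" and i: "i \<in> verts n" and ij: "i \<noteq> j"
    have "avg n w r (eqm n w r (verts n - {j})) \<le> eqm n w r (verts n - {j}) i"
      using part1_aux[OF assms(1) j i ij] H j by blast
    thus "0 \<le> eqm n w r (verts n - {j}) i - avg n w r (eqm n w r (verts n - {j}))" by simp
  qed
next
  assume H: "\<forall>j\<in>verts n. \<forall>i\<in>verts n - ({j} \<union> nbr n w j).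
            Ns n w i j * mass n w r (eqm n w r (verts n - {j})) \<le> vol n w r * deg n w i powr r"
  show "in_C0 n w r" unfolding in_C0_def fj_def
  proof (intro ballI impI)
    fix j i assume j: "j \<in> verts n" and i: "i \<in> verts n" and ij: "i \<noteq> j"
    show "0 < w i j \<or> 0 \<le> eqm n w r (verts n - {j}) i - avg n w r (eqm n w r (verts n - {j}))"
    proof (cases "w i j > 0")
      case False
      have "avg n w r (eqm n w r (verts n - {j})) \<le> eqm n w r (verts n - {j}) i"
        using part2_aux[OF assms(1) j i ij False] H j by blast
      thus ?thesis by simp
    qed simp
  qed
qed

end
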